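(* Let $A \in \mathbb{C}^{n \times n}$, and fix $A^-\in A\{1\}$ and $A^{GD}\in A\{GD\}$. For $X\in\mathbb{C}^{n\times n}$ the following are equivalent: (i) $X = A^{GD}AA^{-}$; (ii) $AX = AA^{-}$ and $R(X)=R(A^{GD}A)$; (iii) $A^{-}AX = A^{-}AA^{-}$ and $R(X)=R(A^{GD}A)$.
   Context: For $A\in\mathbb{C}^{n\times n}$, $ind(A)$ is the smallest nonnegative integer $k$ with $\mathrm{rank}(A^k)=\mathrm{rank}(A^{k+1})$. $A\{1\}$ is the set of matrices $X$ with $AXA=A$. With $k=ind(A)$, $A\{GD\}$ is the set of G-Drazin inverses of $A$: matrices $X$ with $AXA=A$, $XA^{k+1}=A^k$, $A^{k+1}X=A^k$. $R(\cdot)$ denotes range (column space). The matrix $A^{GD}AA^-$ is called the GD1 inverse of $A$ associated with $A^-$ and $A^{GD}$. *)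

theory Defs
  imports "HOL-Analysis.Analysis"
begin

fun matpow :: "'a::semiring_1^'n^'n \<Rightarrow> nat \<Rightarrow> 'a^'n^'n" where
  "matpow A 0 = mat 1"
| "matpow A (Suc k) = A ** matpow A k"

definition ind :: "complex^'n^'n \<Rightarrow> nat" where
  "ind A = (LEAST k. rank (matpow A k) = rank (matpow A (Suc k)))"

definition inner_inverses :: "complex^'n^'n \<Rightarrow> (complex^'n^'n) set" where
  "inner_inverses A = {X. A ** X ** A = A}"

definition GD_inverses :: "complex^'n^'n \<Rightarrow> (complex^'n^'n) set" where
  "GD_inverses A = {X. A ** X ** A = A
      \<and> X ** matpow A (Suc (ind A)) = matpow A (ind A)
      \<and> matpow A (Suc (ind A)) ** X = matpow A (ind A)}"

definition col_range :: "complex^'n^'m \<Rightarrow> (complex^'m) set" where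
  "col_range M = range (\<lambda>x. M *v x)"

end

theory Submission
  imports Defs
begin

lemma key:
  fixes A M G X :: "complex^'n^'n"
  assumes AMA: "A ** M ** A = A" and AGA: "A ** G ** A = A"
    and AX: "A ** X = A ** M" and R: "col_range X = col_range (G ** A)"
  shows "X = G ** A ** M"
proof -
  have "X *v v = (G ** A ** M) *v v" for v
  proof -
    have "X *v v \<in> col_range (G ** A)" using R unfolding col_range_def by auto
    then obtain w where w: "X *v v = (G ** A) *v w" unfolding col_range_def by auto
    have "(G ** A) *v (X *v v) = (G ** (A ** G ** A)) *v w"
      by (simp add: w matrix_vector_mul_assoc matrix_mul_assoc)
    also have "\<dots> = X *v v" using AGA w by simp
    finally have 1: "(G ** A) *v (X *v v) = X *v v" .
    have "(G ** A) *v (X *v v) = (G ** (A ** X)) *v v"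
      by (simp add: matrix_vector_mul_assoc matrix_mul_assoc)
    also have "\<dots> = (G ** A ** M) *v v" by (simp add: AX matrix_mul_assoc)
    finally show ?thesis using 1 by simp
  qed
  then show ?thesis by (simp add: matrix_eq)
qed

theorem theorem2p5:
  fixes A Am Agd X :: "complex^'n^'n"
  assumes "Am \<in> inner_inverses A"
    and "Agd \<in> GD_inverses A"
  shows "(X = Agd ** A ** Am
          \<longleftrightarrow> (A ** X = A ** Am \<and> col_range X = col_range (Agd ** A)))
       \<and> (X = Agd ** A ** Am
          \<longleftrightarrow> (Am ** A ** X = Am ** A ** Am \<and> col_range X = col_range (Agd ** A)))"
proof -
  have AMA: "A ** Am ** A = A" using assms(1) by (simp add: inner_inverses_def)
  have AGA: "A ** Agd ** A = A" using assms(2) by (simp add: GD_inverses_def)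
  have f1: "A ** (Agd ** A ** Am) = A ** Am"
    using AGA by (metis matrix_mul_assoc)
  have f2: "col_range (Agd ** A ** Am) = col_range (Agd ** A)"
  proof
    show "col_range (Agd ** A ** Am) \<subseteq> col_range (Agd ** A)"
      unfolding col_range_def by (auto simp: matrix_vector_mul_assoc[symmetric])
    have "Agd ** A = (Agd ** A ** Am) ** A" using AMA by (metis matrix_mul_assoc)
    then show "col_range (Agd ** A) \<subseteq> col_range (Agd ** A ** Am)"
      unfolding col_range_def
      by (metis (no_types, lifting) image_subset_iff matrix_vector_mul_assoc rangeI)
  qed
  have iii: "A ** X = A ** Am \<longleftrightarrow> Am ** A ** X = Am ** A ** Am"
  proof
    assume "A ** X = A ** Am" then show "Am ** A ** X = Am ** A ** Am"
      by (metis matrix_mul_assoc)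
  next
    assume h: "Am ** A ** X = Am ** A ** Am"
    have "A ** X = (A ** Am ** A) ** X" using AMA by simp
    also have "\<dots> = A ** (Am ** A ** X)" by (simp add: matrix_mul_assoc)
    also have "\<dots> = (A ** Am ** A) ** Am" by (simp add: h matrix_mul_assoc)
    finally show "A ** X = A ** Am" using AMA by simp
  qed
  have "X = Agd ** A ** Am \<longleftrightarrow> (A ** X = A ** Am \<and> col_range X = col_range (Agd ** A))"
    using f1 f2 key[OF AMA AGA] by blast
  then show ?thesis using iii by blast
qed

end
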